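(* Let $G=(V,E)$ be a moral DAG and $\pi$ an arbitrary topological ordering of $G$. Let $S=\{s_1,\dots,s_k\}\subseteq V$ with $\pi(s_1)<\pi(s_2)<\dots<\pi(s_k)$. Then every arc $u\to v$ of $G$ with $s_1\in \mathrm{Des}(u)\cap\mathrm{Anc}(v)$ is oriented (directed) in the interventional essential graph $\mathcal{E}_{\{S\}}(G)$.
   Context: A moral DAG is a DAG without v-structures ($u\to x\leftarrow y$ with $u,y$ nonadjacent). $\mathrm{Des}(u)$ and $\mathrm{Anc}(v)$ denote the (strict) descendants of $u$ and ancestors of $v$ in $G$. The interventional essential graph $\mathcal{E}_{\{S\}}(G)$ of the single intervention $S$ is obtained from the skeleton of $G$ by orienting, as in $G$, every edge with exactly one endpoint in $S$ (there are no v-structures), then repeatedly applying Meek rules until none applies: R1 orients $a - b$ as $a\to b$ if $c\to a$ with $c,b$ nonadjacent; R2 if $a\to c\to b$; R3 if $d - a - c$, $d\to b\leftarrow c$, $c,d$ nonadjacent; R4 if $d - a - c$, $d\to c\to b$, $b,d$ nonadjacent. *)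

theory Defs
  imports Main
begin

definition dag :: "'a set \<Rightarrow> ('a \<times> 'a) set \<Rightarrow> bool" where
  "dag V E \<longleftrightarrow> finite V \<and> E \<subseteq> V \<times> V \<and> acyclic E"

definition adj :: "('a \<times> 'a) set \<Rightarrow> 'a \<Rightarrow> 'a \<Rightarrow> bool" where
  "adj E x y \<longleftrightarrow> (x, y) \<in> E \<or> (y, x) \<in> E"

definition moral :: "('a \<times> 'a) set \<Rightarrow> bool" where
  "moral E \<longleftrightarrow> (\<forall>u x y. (u, x) \<in> E \<and> (y, x) \<in> E \<and> u \<noteq> y \<longrightarrow> adj E u y)"

definition topological_ordering :: "'a set \<Rightarrow> ('a \<times> 'a) set \<Rightarrow> ('a \<Rightarrow> nat) \<Rightarrow> bool" where
  "topological_ordering V E \<pi> \<longleftrightarrow> inj_on \<pi> V \<and> (\<forall>(u, v) \<in> E. \<pi> u < \<pi> v)"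

definition Des :: "('a \<times> 'a) set \<Rightarrow> 'a \<Rightarrow> 'a set" where
  "Des E u = {x. (u, x) \<in> E\<^sup>+}"

definition Anc :: "('a \<times> 'a) set \<Rightarrow> 'a \<Rightarrow> 'a set" where
  "Anc E v = {x. (x, v) \<in> E\<^sup>+}"

text \<open>Partially directed graphs: skeleton of E, plus the set D of oriented pairs.
  An edge x - y is undirected in state D if it is in the skeleton and not oriented either way.\<close>

definition undir :: "('a \<times> 'a) set \<Rightarrow> ('a \<times> 'a) set \<Rightarrow> 'a \<Rightarrow> 'a \<Rightarrow> bool" where
  "undir E D x y \<longleftrightarrow> adj E x y \<and> (x, y) \<notin> D \<and> (y, x) \<notin> D"

definition meek_R1 :: "('a \<times> 'a) set \<Rightarrow> ('a \<times> 'a) set \<Rightarrow> 'a \<Rightarrow> 'a \<Rightarrow> bool" where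
  "meek_R1 E D a b \<longleftrightarrow> undir E D a b \<and> (\<exists>c. (c, a) \<in> D \<and> c \<noteq> b \<and> \<not> adj E c b)"

definition meek_R2 :: "('a \<times> 'a) set \<Rightarrow> ('a \<times> 'a) set \<Rightarrow> 'a \<Rightarrow> 'a \<Rightarrow> bool" where
  "meek_R2 E D a b \<longleftrightarrow> undir E D a b \<and> (\<exists>c. (a, c) \<in> D \<and> (c, b) \<in> D)"

definition meek_R3 :: "('a \<times> 'a) set \<Rightarrow> ('a \<times> 'a) set \<Rightarrow> 'a \<Rightarrow> 'a \<Rightarrow> bool" where
  "meek_R3 E D a b \<longleftrightarrow> undir E D a b \<and>
     (\<exists>c d. undir E D d a \<and> undir E D a c \<and> (d, b) \<in> D \<and> (c, b) \<in> D
            \<and> c \<noteq> d \<and> \<not> adj E c d)"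

definition meek_R4 :: "('a \<times> 'a) set \<Rightarrow> ('a \<times> 'a) set \<Rightarrow> 'a \<Rightarrow> 'a \<Rightarrow> bool" where
  "meek_R4 E D a b \<longleftrightarrow> undir E D a b \<and>
     (\<exists>c d. undir E D d a \<and> undir E D a c \<and> (d, c) \<in> D \<and> (c, b) \<in> D
            \<and> b \<noteq> d \<and> \<not> adj E b d)"

definition meek_applies :: "('a \<times> 'a) set \<Rightarrow> ('a \<times> 'a) set \<Rightarrow> 'a \<Rightarrow> 'a \<Rightarrow> bool" where
  "meek_applies E D a b \<longleftrightarrow> meek_R1 E D a b \<or> meek_R2 E D a b \<or> meek_R3 E D a b \<or> meek_R4 E D a b"

definition meek_step :: "('a \<times> 'a) set \<Rightarrow> ('a \<times> 'a) set \<Rightarrow> ('a \<times> 'a) set \<Rightarrow> bool" where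
  "meek_step E D D' \<longleftrightarrow> (\<exists>a b. meek_applies E D a b \<and> D' = insert (a, b) D)"

definition interv_init :: "('a \<times> 'a) set \<Rightarrow> 'a set \<Rightarrow> ('a \<times> 'a) set" where
  "interv_init E S = {(x, y) \<in> E. (x \<in> S) \<noteq> (y \<in> S)}"

text \<open>D is (the set of directed arcs of) an interventional essential graph E_{S}(G):
  obtained from the initial orientation by repeatedly applying Meek rules until none applies.\<close>
definition interv_essential :: "('a \<times> 'a) set \<Rightarrow> 'a set \<Rightarrow> ('a \<times> 'a) set \<Rightarrow> bool" where
  "interv_essential E S D \<longleftrightarrow>
     (meek_step E)\<^sup>*\<^sup>* (interv_init E S) D \<and> (\<forall>a b. \<not> meek_applies E D a b)"

end

theory Submission
  imports Defs
begin

context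
  fixes E :: "('a \<times> 'a) set" and \<pi> :: "'a \<Rightarrow> nat" and S :: "'a set" and s1 :: 'a
    and D :: "('a \<times> 'a) set"
  assumes mor: "moral E"
    and ord: "\<And>x y. (x, y) \<in> E \<Longrightarrow> \<pi> x < \<pi> y"
    and s1S: "s1 \<in> S"
    and s1min: "\<forall>s \<in> S. \<pi> s1 \<le> \<pi> s"
begin

lemma ord_tr: "(x, y) \<in> E\<^sup>+ \<Longrightarrow> \<pi> x < \<pi> y"
  by (induction rule: trancl_induct) (auto dest: ord)

lemma ord_rtr: "(x, y) \<in> E\<^sup>* \<Longrightarrow> \<pi> x \<le> \<pi> y"
  by (induction rule: rtrancl_induct) (auto dest: ord)

lemma step_sub: "meek_step E D1 D2 \<Longrightarrow> D1 \<subseteq> E \<Longrightarrow> D2 \<subseteq> E"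
proof -
  assume st: "meek_step E D1 D2" and sub: "D1 \<subseteq> E"
  then obtain a b where ap: "meek_applies E D1 a b" and D2: "D2 = insert (a, b) D1"
    unfolding meek_step_def by blast
  have ab: "adj E a b" using ap unfolding meek_applies_def meek_R1_def meek_R2_def
      meek_R3_def meek_R4_def undir_def by blast
  have "(a, b) \<in> E"
  proof (rule ccontr)
    assume nab: "(a, b) \<notin> E"
    hence ba: "(b, a) \<in> E" using ab unfolding adj_def by blast
    show False
      using ap unfolding meek_applies_def
    proof (elim disjE)
      assume "meek_R1 E D1 a b"
      then obtain c where "(c, a) \<in> D1" "c \<noteq> b" "\<not> adj E c b" unfolding meek_R1_def by blast
      thus False using mor ba sub unfolding moral_def by blast
    next
      assume "meek_R2 E D1 a b"
      then obtain c where "(a, c) \<in> D1" "(c, b) \<in> D1" unfolding meek_R2_def by blast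
      hence "\<pi> a < \<pi> c" "\<pi> c < \<pi> b" using sub ord by blast+
      thus False using ord[OF ba] by simp
    next
      assume "meek_R3 E D1 a b"
      then obtain c d where h: "adj E d a" "adj E a c" "(d, b) \<in> D1" "(c, b) \<in> D1"
        "c \<noteq> d" "\<not> adj E c d" unfolding meek_R3_def undir_def by blast
      have pd: "\<pi> d < \<pi> b" "\<pi> c < \<pi> b" using h sub ord by blast+
      have pb: "\<pi> b < \<pi> a" using ord[OF ba] .
      have "(d, a) \<in> E" using h(1) pd pb ord unfolding adj_def by fastforce
      moreover have "(c, a) \<in> E" using h(2) pd pb ord unfolding adj_def by fastforce
      ultimately show False using mor h unfolding moral_def adj_def by blast
    next
      assume "meek_R4 E D1 a b"
      then obtain c d where h: "adj E d a" "adj E a c" "(d, c) \<in> D1" "(c, b) \<in> D1"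
        "b \<noteq> d" "\<not> adj E b d" unfolding meek_R4_def undir_def by blast
      have pd: "\<pi> d < \<pi> c" "\<pi> c < \<pi> b" using h sub ord by blast+
      have pb: "\<pi> b < \<pi> a" using ord[OF ba] .
      have "(d, a) \<in> E" using h(1) pd pb ord unfolding adj_def by fastforce
      thus False using mor h ba unfolding moral_def adj_def by blast
    qed
  qed
  thus ?thesis using D2 sub by blast
qed

lemma reach_props:
  assumes "(meek_step E)\<^sup>*\<^sup>* (interv_init E S) D"
  shows "D \<subseteq> E \<and> interv_init E S \<subseteq> D"
  using assms
proof (induction rule: rtranclp_induct)
  case base
  then show ?case unfolding interv_init_def by blast
next
  case (step y z)
  then show ?case using step_sub[of y z] unfolding meek_step_def by blast
qed

context
  assumes ess: "interv_essential E S D"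
begin

lemma DE: "D \<subseteq> E" and initD: "interv_init E S \<subseteq> D"
  using reach_props ess unfolding interv_essential_def by blast+

lemma noapp: "\<not> meek_applies E D a b"
  using ess unfolding interv_essential_def by blast

lemma closed_undir: "(a, b) \<in> E \<Longrightarrow> (a, b) \<notin> D \<Longrightarrow> undir E D a b"
proof -
  assume ab: "(a, b) \<in> E" "(a, b) \<notin> D"
  have "(b, a) \<notin> D"
  proof
    assume "(b, a) \<in> D"
    hence "\<pi> b < \<pi> a" using DE ord by blast
    thus False using ord[OF ab(1)] by simp
  qed
  thus ?thesis using ab unfolding undir_def adj_def by blast
qed

lemma lemB: "y \<notin> S \<Longrightarrow> (s1, y) \<in> E\<^sup>+ \<Longrightarrow> \<exists>z. (s1, z) \<in> E\<^sup>* \<and> (z, y) \<in> D"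
proof (induction "\<pi> y" arbitrary: y rule: less_induct)
  case less
  obtain z0 where "(s1, z0) \<in> E\<^sup>*" "(z0, y) \<in> E"
    using less.prems(2) by (metis tranclD2)
  then obtain z where zP: "(s1, z) \<in> E\<^sup>* \<and> (z, y) \<in> E"
    and zmin: "\<forall>z'. (s1, z') \<in> E\<^sup>* \<and> (z', y) \<in> E \<longrightarrow> \<pi> z \<le> \<pi> z'"
    using ex_has_least_nat[of "\<lambda>z. (s1, z) \<in> E\<^sup>* \<and> (z, y) \<in> E" z0 \<pi>] by blast
  show ?case
  proof (cases "z \<in> S")
    case True
    hence "(z, y) \<in> D" using initD zP less.prems(1) unfolding interv_init_def by blast
    thus ?thesis using zP by blast
  next
    case False
    hence "z \<noteq> s1" using s1S by blast
    hence zt: "(s1, z) \<in> E\<^sup>+" using zP using rtranclD by metis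
    have "\<pi> z < \<pi> y" using zP ord by blast
    then obtain w where w: "(s1, w) \<in> E\<^sup>*" "(w, z) \<in> D"
      using less.hyps[OF _ False zt] by blast
    have wz: "\<pi> w < \<pi> z" using w DE ord by blast
    have "(z, y) \<in> D"
    proof (rule ccontr)
      assume "(z, y) \<notin> D"
      hence u: "undir E D z y" using closed_undir zP by blast
      have "\<not> adj E w y"
      proof
        assume "adj E w y"
        hence "(w, y) \<in> E \<or> (y, w) \<in> E" unfolding adj_def .
        thus False
        proof
          assume "(w, y) \<in> E" thus False using zmin w(1) wz by fastforce
        next
          assume "(y, w) \<in> E" thus False using ord wz \<open>\<pi> z < \<pi> y\<close> by fastforce
        qed
      qed
      moreover have "w \<noteq> y" using wz \<open>\<pi> z < \<pi> y\<close> by auto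
      ultimately have "meek_R1 E D z y" using u w unfolding meek_R1_def by blast
      thus False using noapp unfolding meek_applies_def by blast
    qed
    thus ?thesis using zP by blast
  qed
qed

lemma lemA: "(x, s1) \<in> E\<^sup>+ \<Longrightarrow> (x, y) \<in> E \<Longrightarrow> (s1, y) \<in> E\<^sup>* \<Longrightarrow> (x, y) \<in> D"
proof (induction "\<pi> y" arbitrary: y rule: less_induct)
  case less
  have xs: "\<pi> x < \<pi> s1" using ord_tr less.prems(1) .
  hence xS: "x \<notin> S" using s1min by fastforce
  show ?case
  proof (cases "y \<in> S")
    case True
    thus ?thesis using initD xS less.prems(2) unfolding interv_init_def by blast
  next
    case False
    hence "y \<noteq> s1" using s1S by blast
    hence yt: "(s1, y) \<in> E\<^sup>+" using less.prems(3) using rtranclD by metis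
    obtain z where z: "(s1, z) \<in> E\<^sup>*" "(z, y) \<in> D" using lemB[OF False yt] by blast
    have sz: "\<pi> s1 \<le> \<pi> z" using ord_rtr z(1) .
    have zyE: "(z, y) \<in> E" using z DE by blast
    have "x \<noteq> z" using xs sz by auto
    hence "adj E x z" using mor zyE less.prems(2) unfolding moral_def by blast
    hence xz: "(x, z) \<in> E" using ord xs sz unfolding adj_def by fastforce
    have "\<pi> z < \<pi> y" using ord zyE .
    hence xzD: "(x, z) \<in> D" using less.hyps less.prems(1) xz z(1) by blast
    show ?thesis
    proof (rule ccontr)
      assume "(x, y) \<notin> D"
      hence "undir E D x y" using closed_undir less.prems(2) by blast
      hence "meek_R2 E D x y" using xzD z(2) unfolding meek_R2_def by blast
      thus False using noapp unfolding meek_applies_def by blast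
    qed
  qed
qed

end
end

theorem mainTheorem5:
  fixes V :: "'a set" and E :: "('a \<times> 'a) set" and \<pi> :: "'a \<Rightarrow> nat"
    and S :: "'a set" and s1 u v :: 'a
  assumes "dag V E"
    and "moral E"
    and "topological_ordering V E \<pi>"
    and "S \<subseteq> V"
    and "s1 \<in> S"
    and "\<forall>s \<in> S. \<pi> s1 \<le> \<pi> s"
    and "(u, v) \<in> E"
    and "s1 \<in> Des E u \<inter> Anc E v"
    and "interv_essential E S D"
  shows "(u, v) \<in> D"
proof -
  have ord: "\<And>x y. (x, y) \<in> E \<Longrightarrow> \<pi> x < \<pi> y"
    using assms(3) unfolding topological_ordering_def by blast
  have "(u, s1) \<in> E\<^sup>+" "(s1, v) \<in> E\<^sup>*"
    using assms(8) unfolding Des_def Anc_def by auto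
  thus ?thesis
    using lemA[OF assms(2) ord assms(5) assms(6) assms(9)] assms(7) by blast
qed

end
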